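(* Let $k$ be a field containing all $m$-th roots of unity, with $p\nmid m$ if $\operatorname{char}(k)=p>0$. Let $\mathcal A$ be a perfect $k$-algebra, $S$ a commutative associative unital $k$-algebra, $\sigma_1\in\operatorname{Aut}(\mathcal A)$, $\sigma_2\in\operatorname{Aut}(S)$ with $\sigma_1^m=\mathrm{id}$, $\sigma_2^m=\mathrm{id}$, suppose $S_{\bar 1}$ contains an invertible element $u$ of $S$, and suppose $\psi:C(\mathcal A)\otimes S\to C(\mathcal A\otimes S)$, $\gamma\otimes s\mapsto\gamma\otimes L_s$, is an isomorphism. Let $d\in\mathcal D((\mathcal A\otimes S)_{\bar 0})$ and let $D\in\mathcal D(\mathcal A\otimes S)_{\bar 0}$ satisfy $D|_{(\mathcal A\otimes S)_{\bar 0}}=d$. Let $\bar i,\bar s\in\mathbb Z_m$, $a_{\bar i}\in\mathcal A_{\bar i}$, $b_{-\bar i+\bar s}\in S_{-\bar i+\bar s}$. Then: (a) for every integer $n$ with $n\cdot 1_k\neq 0$, $$D(a_{\bar i}\otimes b_{-\bar i+\bar s})=d\big(a_{\bar i}\otimes u^{-\epsilon(\bar s)}b_{-\bar i+\bar s}\big)u^{\epsilon(\bar s)}+\epsilon(\bar s)(mn)^{-1}u^{\epsilon(\bar i)}\Big[u^{-mn}d\big(a_{\bar i}\otimes u^{-\epsilon(\bar i)+mn}\big)-d\big(a_{\bar i}\otimes u^{-\epsilon(\bar i)}\big)\Big]b_{-\bar i+\bar s};$$ in particular, if $\operatorname{char}(k)=0$ this holds for every nonzero integer $n$. (b) if $\operatorname{char}(k)=p>0$,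 then $D(a_{\bar i}\otimes b_{-\bar i+\bar s})=d(a_{\bar i}\otimes u^{-pr}b_{-\bar i+\bar s})u^{pr}$, where $r=\epsilon(\bar s\bar p^{-1})$ and $\bar p$ is the image of $p$ in $\mathbb Z_m$.
   Context: Algebras are $k$-vector spaces with bilinear product (not necessarily associative); perfect means $\mathcal A\mathcal A=\mathcal A$; $C(\mathcal A)$ is the centroid $\{\gamma\in\operatorname{End}(\mathcal A)\mid\gamma(xy)=\gamma(x)y=x\gamma(y)\}$; $\mathcal D$ denotes derivations. Fix a primitive $m$-th root of unity $\omega$; $\mathcal A_{\bar i}=\{a\mid\sigma_1(a)=\omega^ia\}$, $S_{\bar i}=\{s\mid\sigma_2(s)=\omega^is\}$, $(\mathcal A\otimes S)_{\bar i}=\sum_{\bar j}\mathcal A_{\bar i-\bar j}\otimes S_{\bar j}$, and $\mathcal D(\mathcal A\otimes S)_{\bar 0}$ is the set of derivations of $\mathcal A\otimes S$ mapping each $(\mathcal A\otimes S)_{\bar j}$ into itself. For $\bar i\in\mathbb Z_m$, $\epsilon(\bar i)$ is the unique representative of $\bar i$ in $\{0,1,\dots,m-1\}$. $\mathcal A\otimes S$ is an $S$-bimodule by $s'(a\otimes s)=(a\otimes s)s'=a\otimes ss'$; expressions like $x\,s$ or $s\,x$ for $x\in\mathcal A\otimes S$, $s\in S$ denote this action. *)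

theory Defs
  imports Main "HOL.Vector_Spaces" "HOL-Library.Function_Algebras" "HOL-Number_Theory.Cong"
begin

(* epsilon: representative in {0,...,m-1} of the class of an integer in Z_m *)
definition eps :: "nat \<Rightarrow> int \<Rightarrow> nat" where
  "eps m i = nat (i mod int m)"

(* integer powers of an invertible element u with inverse v *)
definition zpow :: "'s::comm_ring_1 \<Rightarrow> 's \<Rightarrow> int \<Rightarrow> 's" where
  "zpow u v n = (if 0 \<le> n then u ^ nat n else v ^ nat (- n))"

definition bilinear_on ::
  "('k \<Rightarrow> 'v::ab_group_add \<Rightarrow> 'v) \<Rightarrow> 'v set \<Rightarrow> ('k \<Rightarrow> 'w::ab_group_add \<Rightarrow> 'w) \<Rightarrow> 'w set \<Rightarrow>
   ('k \<Rightarrow> 't \<Rightarrow> 't) \<Rightarrow> ('v \<Rightarrow> 'w \<Rightarrow> 't::ab_group_add) \<Rightarrow> bool" where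
  "bilinear_on sV V sW W sT f \<longleftrightarrow>
     (\<forall>x\<in>V. \<forall>y\<in>V. \<forall>w\<in>W. f (x + y) w = f x w + f y w) \<and>
     (\<forall>x\<in>V. \<forall>w\<in>W. \<forall>z\<in>W. f x (w + z) = f x w + f x z) \<and>
     (\<forall>c. \<forall>x\<in>V. \<forall>w\<in>W. f (sV c x) w = sT c (f x w) \<and> f x (sW c w) = sT c (f x w))"

definition is_tensor_product ::
  "('k::field \<Rightarrow> 'v::ab_group_add \<Rightarrow> 'v) \<Rightarrow> 'v set \<Rightarrow> ('k \<Rightarrow> 'w::ab_group_add \<Rightarrow> 'w) \<Rightarrow> 'w set \<Rightarrow>
   ('k \<Rightarrow> 't \<Rightarrow> 't) \<Rightarrow> ('v \<Rightarrow> 'w \<Rightarrow> 't::ab_group_add) \<Rightarrow> bool" where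
  "is_tensor_product sV V sW W sT tp \<longleftrightarrow>
     bilinear_on sV V sW W sT tp \<and>
     (\<exists>BV BW. BV \<subseteq> V \<and> BW \<subseteq> W \<and>
        module.independent sV BV \<and> module.span sV BV = V \<and>
        module.independent sW BW \<and> module.span sW BW = W \<and>
        inj_on (\<lambda>(x, y). tp x y) (BV \<times> BW) \<and>
        module.independent sT ((\<lambda>(x, y). tp x y) ` (BV \<times> BW)) \<and>
        module.span sT ((\<lambda>(x, y). tp x y) ` (BV \<times> BW)) = UNIV)"

(* bilinear product (a k-algebra structure, not necessarily associative) *)
definition is_algebra :: "('k::field \<Rightarrow> 'a \<Rightarrow> 'a) \<Rightarrow> ('a \<Rightarrow> 'a \<Rightarrow> 'a::ab_group_add) \<Rightarrow> bool" where
  "is_algebra sc mul \<longleftrightarrow> vector_space sc \<and>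
     (\<forall>x y z. mul (x + y) z = mul x z + mul y z \<and> mul x (y + z) = mul x y + mul x z) \<and>
     (\<forall>c x y. mul (sc c x) y = sc c (mul x y) \<and> mul x (sc c y) = sc c (mul x y))"

definition perfect :: "('k::field \<Rightarrow> 'a \<Rightarrow> 'a) \<Rightarrow> ('a \<Rightarrow> 'a \<Rightarrow> 'a::ab_group_add) \<Rightarrow> bool" where
  "perfect sc mul \<longleftrightarrow> module.span sc {mul x y | x y. True} = UNIV"

definition is_automorphism ::
  "('k::field \<Rightarrow> 'a \<Rightarrow> 'a) \<Rightarrow> ('a \<Rightarrow> 'a \<Rightarrow> 'a::ab_group_add) \<Rightarrow> ('a \<Rightarrow> 'a) \<Rightarrow> bool" where
  "is_automorphism sc mul f \<longleftrightarrow> Vector_Spaces.linear sc sc f \<and> bij f \<and>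
     (\<forall>x y. f (mul x y) = mul (f x) (f y))"

definition centroid ::
  "('k::field \<Rightarrow> 'a \<Rightarrow> 'a) \<Rightarrow> ('a \<Rightarrow> 'a \<Rightarrow> 'a::ab_group_add) \<Rightarrow> ('a \<Rightarrow> 'a) set" where
  "centroid sc mul = {g. Vector_Spaces.linear sc sc g \<and>
     (\<forall>x y. g (mul x y) = mul (g x) y \<and> g (mul x y) = mul x (g y))}"

definition fun_scale :: "('k \<Rightarrow> 'a \<Rightarrow> 'a) \<Rightarrow> 'k \<Rightarrow> ('a \<Rightarrow> 'a) \<Rightarrow> ('a \<Rightarrow> 'a)" where
  "fun_scale sc c g = (\<lambda>x. sc c (g x))"

definition is_derivation_on ::
  "('k::field \<Rightarrow> 'a \<Rightarrow> 'a) \<Rightarrow> ('a \<Rightarrow> 'a \<Rightarrow> 'a::ab_group_add) \<Rightarrow> 'a set \<Rightarrow> ('a \<Rightarrow> 'a) \<Rightarrow> bool" where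
  "is_derivation_on sc mul X d \<longleftrightarrow>
     (\<forall>x\<in>X. d x \<in> X) \<and>
     (\<forall>x\<in>X. \<forall>y\<in>X. d (x + y) = d x + d y) \<and>
     (\<forall>c. \<forall>x\<in>X. d (sc c x) = sc c (d x)) \<and>
     (\<forall>x\<in>X. \<forall>y\<in>X. d (mul x y) = mul (d x) y + mul x (d y))"

definition grade :: "('k::field \<Rightarrow> 'a \<Rightarrow> 'a) \<Rightarrow> nat \<Rightarrow> 'k \<Rightarrow> ('a \<Rightarrow> 'a) \<Rightarrow> int \<Rightarrow> 'a set" where
  "grade sc m \<omega> \<sigma> i = {a. \<sigma> a = sc (\<omega> ^ eps m i) a}"

definition tgrade ::
  "('k::field \<Rightarrow> 't \<Rightarrow> 't) \<Rightarrow> ('a \<Rightarrow> 's \<Rightarrow> 't::ab_group_add) \<Rightarrow>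
   (int \<Rightarrow> 'a set) \<Rightarrow> (int \<Rightarrow> 's set) \<Rightarrow> int \<Rightarrow> 't set" where
  "tgrade sT tp GA GS i = module.span sT {tp a s | a s j. a \<in> GA (i - j) \<and> s \<in> GS j}"

end

theory Submission
  imports Defs
begin

lemma zpow_succ:
  fixes u v :: "'s::comm_ring_1"
  assumes "u * v = 1"
  shows "zpow u v (k + 1) = zpow u v k * u"
proof (cases "0 \<le> k")
  case True
  then have "nat (k+1) = Suc (nat k)" by simp
  then show ?thesis using True by (simp add: zpow_def mult.commute)
next
  case False
  show ?thesis
  proof (cases "k = -1")
    case True then show ?thesis using assms by (simp add: zpow_def mult.commute)
  next
    case False2: False
    then have "nat (-k) = Suc (nat (- (k+1)))" using False by simp
    then show ?thesis using False False2 assms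
      by (simp add: zpow_def mult.assoc[symmetric] mult.commute[of v u])
         (metis mult.assoc mult.commute mult_1_right)
  qed
qed

lemma zpow_pred:
  fixes u v :: "'s::comm_ring_1"
  assumes "u * v = 1"
  shows "zpow u v (k - 1) = zpow u v k * v"
proof -
  have "zpow u v k = zpow u v (k - 1) * u" using zpow_succ[OF assms, of "k-1"] by simp
  then have "zpow u v k * v = zpow u v (k - 1) * (u * v)" by (simp add: mult.assoc)
  then show ?thesis using assms by simp
qed

lemma zpow_add:
  fixes u v :: "'s::comm_ring_1"
  assumes "u * v = 1"
  shows "zpow u v k * zpow u v l = zpow u v (k + l)"
proof (induction l rule: int_induct[where k=0])
  case base then show ?case by (simp add: zpow_def)
next
  case (step1 i)
  then show ?case using zpow_succ[OF assms, of i] zpow_succ[OF assms, of "k+i"]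
    by (simp add: mult.assoc[symmetric] add.assoc[symmetric])
next
  case (step2 i)
  then show ?case using zpow_pred[OF assms, of i] zpow_pred[OF assms, of "k+i"]
    by (simp add: mult.assoc[symmetric] add_diff_eq)
qed

lemma zpow_0[simp]: "zpow u v 0 = 1" by (simp add: zpow_def)

lemma zpow_inv:
  fixes u v :: "'s::comm_ring_1"
  assumes "u * v = 1"
  shows "zpow u v (- k) * zpow u v k = 1"
  using zpow_add[OF assms, of "-k" k] by simp

lemma span_ext:
  assumes vs: "vector_space sc" and sp: "module.span sc G = UNIV"
    and fa: "\<forall>x y. f (x + y) = f x + f y" and fs: "\<forall>c x. f (sc c x) = sc c (f x)"
    and ga: "\<forall>x y. g (x + y) = g x + g y" and gs: "\<forall>c x. g (sc c x) = sc c (g x)"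
    and eq: "\<forall>x\<in>G. f x = g x"
  shows "f x = g x"
proof -
  interpret vector_space sc by (rule vs)
  have "x \<in> span G" using sp by simp
  then show ?thesis
  proof (induction rule: span_induct_alt)
    case base
    have "f 0 = 0" using fa by (metis add_cancel_right_right)
    moreover have "g 0 = 0" using ga by (metis add_cancel_right_right)
    ultimately show ?case by simp
  next
    case (step c x y)
    then show ?case using fa fs ga gs eq by simp
  qed
qed

lemma omega_pow_mod:
  fixes \<omega> :: "'k::field"
  assumes "\<omega> ^ m = 1"
  shows "\<omega> ^ n = \<omega> ^ (n mod m)"
proof -
  have "n = m * (n div m) + n mod m" by simp
  then have "\<omega> ^ n = \<omega> ^ (m * (n div m)) * \<omega> ^ (n mod m)" by (metis power_add)
  also have "\<omega> ^ (m * (n div m)) = 1" by (simp add: power_mult assms)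
  finally show ?thesis by simp
qed

lemma eps_add:
  assumes "m \<ge> 1"
  shows "eps m (j + j') = (eps m j + eps m j') mod m"
proof -
  have "int ((eps m j + eps m j') mod m) = (j mod int m + j' mod int m) mod int m"
    using assms by (simp add: eps_def zmod_int)
  also have "\<dots> = (j + j') mod int m" by (simp add: mod_add_eq)
  finally show ?thesis using assms by (simp add: eps_def)
qed

lemma omega_eps_add:
  fixes \<omega> :: "'k::field"
  assumes "\<omega> ^ m = 1" "m \<ge> 1"
  shows "\<omega> ^ eps m j * \<omega> ^ eps m j' = \<omega> ^ eps m (j + j')"
  using omega_pow_mod[OF assms(1), of "eps m j + eps m j'"] eps_add[OF assms(2), of j j']
  by (simp add: power_add)

lemma eps_cong: "[j = j'] (mod int m) \<Longrightarrow> eps m j = eps m j'"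
  by (simp add: eps_def cong_def)

lemma grade_cong: "[j = j'] (mod int m) \<Longrightarrow> grade sc m \<omega> \<sigma> j = grade sc m \<omega> \<sigma> j'"
  by (simp add: grade_def eps_cong)

theorem lemma4p4:
  fixes scA :: "'k::field \<Rightarrow> 'a::ab_group_add \<Rightarrow> 'a" and mA :: "'a \<Rightarrow> 'a \<Rightarrow> 'a"
    and scS :: "'k \<Rightarrow> 's::comm_ring_1 \<Rightarrow> 's"
    and scT :: "'k \<Rightarrow> 't::ab_group_add \<Rightarrow> 't" and mT :: "'t \<Rightarrow> 't \<Rightarrow> 't"
    and tp :: "'a \<Rightarrow> 's \<Rightarrow> 't" and act :: "'t \<Rightarrow> 's \<Rightarrow> 't"
    and \<sigma>1 :: "'a \<Rightarrow> 'a" and \<sigma>2 :: "'s \<Rightarrow> 's"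
    and m :: nat and \<omega> :: 'k and u v :: 's
    and scC :: "'k \<Rightarrow> 'c::ab_group_add \<Rightarrow> 'c" and tpC :: "('a \<Rightarrow> 'a) \<Rightarrow> 's \<Rightarrow> 'c"
    and \<psi> :: "'c \<Rightarrow> ('t \<Rightarrow> 't)"
    and d D :: "'t \<Rightarrow> 't" and i s :: int and a :: 'a and b :: 's
  assumes m_pos: "m \<ge> 1"
    and m_nz: "of_nat m \<noteq> (0::'k)"
    and \<omega>_root: "\<omega> ^ m = 1" and \<omega>_prim: "\<forall>j. 0 < j \<and> j < m \<longrightarrow> \<omega> ^ j \<noteq> 1"
    and all_roots: "\<forall>x::'k. x ^ m = 1 \<longrightarrow> (\<exists>j<m. x = \<omega> ^ j)"
    and A_alg: "is_algebra scA mA" and A_perfect: "perfect scA mA"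
    and S_vs: "vector_space scS" and S_alg: "\<forall>c x y. scS c (x * y) = scS c x * y"
    and T_tensor: "is_tensor_product scA UNIV scS UNIV scT tp"
    and T_alg: "is_algebra scT mT"
    and T_mult: "\<forall>a1 a2 s1 s2. mT (tp a1 s1) (tp a2 s2) = tp (mA a1 a2) (s1 * s2)"
    and act_lin: "\<forall>s'. Vector_Spaces.linear scT scT (\<lambda>x. act x s')"
    and act_tp: "\<forall>a1 s1 s'. act (tp a1 s1) s' = tp a1 (s1 * s')"
    and \<sigma>1_aut: "is_automorphism scA mA \<sigma>1" and \<sigma>1_m: "\<sigma>1 ^^ m = id"
    and \<sigma>2_aut: "is_automorphism scS (*) \<sigma>2" and \<sigma>2_one: "\<sigma>2 1 = 1" and \<sigma>2_m: "\<sigma>2 ^^ m = id"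
    and u_deg: "u \<in> grade scS m \<omega> \<sigma>2 1" and u_inv: "u * v = 1"
    and C_tensor: "is_tensor_product (fun_scale scA) (centroid scA mA) scS UNIV scC tpC"
    and \<psi>_lin: "Vector_Spaces.linear scC (fun_scale scT) \<psi>"
    and \<psi>_tp: "\<forall>\<gamma>\<in>centroid scA mA. \<forall>s'. Vector_Spaces.linear scT scT (\<psi> (tpC \<gamma> s')) \<and>
                  (\<forall>a1 t. \<psi> (tpC \<gamma> s') (tp a1 t) = tp (\<gamma> a1) (s' * t))"
    and \<psi>_iso: "bij_betw \<psi> UNIV (centroid scT mT)"
    and d_der: "is_derivation_on scT mT
                  (tgrade scT tp (grade scA m \<omega> \<sigma>1) (grade scS m \<omega> \<sigma>2) 0) d"
    and D_der: "is_derivation_on scT mT UNIV D"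
    and D_deg0: "\<forall>j. \<forall>x\<in>tgrade scT tp (grade scA m \<omega> \<sigma>1) (grade scS m \<omega> \<sigma>2) j.
                  D x \<in> tgrade scT tp (grade scA m \<omega> \<sigma>1) (grade scS m \<omega> \<sigma>2) j"
    and D_ext: "\<forall>x\<in>tgrade scT tp (grade scA m \<omega> \<sigma>1) (grade scS m \<omega> \<sigma>2) 0. D x = d x"
    and a_deg: "a \<in> grade scA m \<omega> \<sigma>1 i"
    and b_deg: "b \<in> grade scS m \<omega> \<sigma>2 (s - i)"
  shows "(\<forall>n::int. of_int n \<noteq> (0::'k) \<longrightarrow>
            D (tp a b) =
              act (d (tp a (zpow u v (- int (eps m s)) * b))) (zpow u v (int (eps m s)))
              + scT (of_nat (eps m s) * inverse (of_nat m * of_int n))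
                  (act (act (d (tp a (zpow u v (- int (eps m i) + int m * n)))) (zpow u v (- (int m * n)))
                        - d (tp a (zpow u v (- int (eps m i)))))
                       (zpow u v (int (eps m i)) * b)))
       \<and> (CHAR('k) = 0 \<longrightarrow> (\<forall>n::int. n \<noteq> 0 \<longrightarrow>
            D (tp a b) =
              act (d (tp a (zpow u v (- int (eps m s)) * b))) (zpow u v (int (eps m s)))
              + scT (of_nat (eps m s) * inverse (of_nat m * of_int n))
                  (act (act (d (tp a (zpow u v (- int (eps m i) + int m * n)))) (zpow u v (- (int m * n)))
                        - d (tp a (zpow u v (- int (eps m i)))))
                       (zpow u v (int (eps m i)) * b))))
       \<and> (CHAR('k) > 0 \<longrightarrow> (\<forall>r::int. 0 \<le> r \<and> r < int m \<and> [r * int CHAR('k) = s] (mod int m) \<longrightarrow>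
            D (tp a b) =
              act (d (tp a (zpow u v (- (int CHAR('k) * r)) * b))) (zpow u v (int CHAR('k) * r))))"
proof -
  have vsT: "vector_space scT" using T_alg by (simp add: is_algebra_def)
  interpret T: vector_space scT by (rule vsT)
  have mT_addL: "\<And>x y z. mT (x + y) z = mT x z + mT y z" and mT_addR: "\<And>x y z. mT x (y + z) = mT x y + mT x z"
    using T_alg by (simp_all add: is_algebra_def)
  have mT_scL: "\<And>c x y. mT (scT c x) y = scT c (mT x y)" and mT_scR: "\<And>c x y. mT x (scT c y) = scT c (mT x y)"
    using T_alg by (simp_all add: is_algebra_def)
  have act_add: "\<And>x y t. act (x + y) t = act x t + act y t"
    using act_lin by (simp add: linear_iff)
  have act_sc: "\<And>c x t. act (scT c x) t = scT c (act x t)"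
    using act_lin by (simp add: linear_iff)
  have act_neg: "\<And>x t. act (- x) t = - act x t"
    by (rule additive.minus, rule additive.intro, rule act_add)
  have act_diff: "\<And>x y t. act (x - y) t = act x t - act y t"
    by (rule additive.diff, rule additive.intro, rule act_add)
  have act_0: "\<And>t. act 0 t = 0"
    by (rule additive.zero, rule additive.intro, rule act_add)
  have D_add: "\<And>x y. D (x + y) = D x + D y" and D_sc: "\<And>c x. D (scT c x) = scT c (D x)"
    and D_mul: "\<And>x y. D (mT x y) = mT (D x) y + mT x (D y)"
    using D_der by (simp_all add: is_derivation_on_def)
  obtain BV BW where BVW: "module.span scT ((\<lambda>(x, y). tp x y) ` (BV \<times> BW)) = UNIV"
    using T_tensor unfolding is_tensor_product_def by blast
  have Tspan: "module.span scT (range (\<lambda>(x, y). tp x y)) = UNIV"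
    using T.span_mono[of "(\<lambda>(x, y). tp x y) ` (BV \<times> BW)" "range (\<lambda>(x, y). tp x y)"] BVW by auto
  have ext: "f x = g x"
    if "\<forall>x y. f (x + y) = f x + f y" "\<forall>c x. f (scT c x) = scT c (f x)"
       "\<forall>x y. g (x + y) = g x + g y" "\<forall>c x. g (scT c x) = scT c (g x)"
       "\<forall>a1 s1. f (tp a1 s1) = g (tp a1 s1)" for f g x
    by (rule span_ext[OF vsT Tspan]) (use that in auto)
  have act1: "act x 1 = x" for x
    by (rule ext[of "\<lambda>x. act x 1" "\<lambda>x. x"]) (auto simp: act_add act_sc act_tp)
  have act_assoc: "act (act x s) t = act x (s * t)" for x s t
    by (rule ext[of "\<lambda>x. act (act x s) t" "\<lambda>x. act x (s * t)"]) (auto simp: act_add act_sc act_tp mult.assoc)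
  have mT_diffL: "mT (x - y) z = mT x z - mT y z" for x y z
    by (rule additive.diff[of "\<lambda>x. mT x z"], rule additive.intro, rule mT_addL)
  have mT_diffR: "mT z (x - y) = mT z x - mT z y" for x y z
    by (rule additive.diff, rule additive.intro, rule mT_addR)
  have act_mT1_pure: "act (mT x (tp a2 s2)) s = mT x (act (tp a2 s2) s)" for x a2 s2 s
    by (rule ext[of "\<lambda>x. act (mT x (tp a2 s2)) s" "\<lambda>x. mT x (act (tp a2 s2) s)"])
       (auto simp: act_add act_sc act_tp mT_addL mT_scL T_mult mult.assoc)
  have act_mT1: "act (mT x y) s = mT x (act y s)" for x y s
    by (rule ext[of "\<lambda>y. act (mT x y) s" "\<lambda>y. mT x (act y s)"])
       (auto simp: act_add act_sc mT_addR mT_scR act_mT1_pure)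
  have act_mT2_pure: "act (mT (tp a2 s2) y) s = mT (act (tp a2 s2) s) y" for y a2 s2 s
    by (rule ext[of "\<lambda>y. act (mT (tp a2 s2) y) s" "\<lambda>y. mT (act (tp a2 s2) s) y"])
       (auto simp: act_add act_sc act_tp mT_addR mT_scR T_mult mult.assoc mult.commute mult.left_commute)
  have act_mT2: "act (mT x y) s = mT (act x s) y" for x y s
    by (rule ext[of "\<lambda>x. act (mT x y) s" "\<lambda>x. mT (act x s) y"])
       (auto simp: act_add act_sc mT_addL mT_scL act_mT2_pure)
  have vsC: "vector_space scC" and psi_add: "\<And>x y. \<psi> (x + y) = \<psi> x + \<psi> y"
    and psi_sc: "\<And>c x. \<psi> (scC c x) = fun_scale scT c (\<psi> x)"
    using \<psi>_lin by (simp_all add: linear_iff)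
  interpret C: vector_space scC by (rule vsC)
  obtain BVc BWc where BVc: "BVc \<subseteq> centroid scA mA"
    and BCspan: "module.span scC ((\<lambda>(x, y). tpC x y) ` (BVc \<times> BWc)) = UNIV"
    using C_tensor unfolding is_tensor_product_def by blast
  have gen_comm: "\<psi> (tpC \<gamma> s') (act x t) = act (\<psi> (tpC \<gamma> s') x) t"
    if "\<gamma> \<in> centroid scA mA" for \<gamma> s' x t
  proof -
    have lin: "Vector_Spaces.linear scT scT (\<psi> (tpC \<gamma> s'))" and pt: "\<forall>a1 t. \<psi> (tpC \<gamma> s') (tp a1 t) = tp (\<gamma> a1) (s' * t)"
      using \<psi>_tp that by auto
    have la: "\<psi> (tpC \<gamma> s') (x + y) = \<psi> (tpC \<gamma> s') x + \<psi> (tpC \<gamma> s') y"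
      and ls: "\<psi> (tpC \<gamma> s') (scT c x) = scT c (\<psi> (tpC \<gamma> s') x)" for x y c
      using lin by (simp_all add: linear_iff)
    show ?thesis
      by (rule ext[of "\<lambda>x. \<psi> (tpC \<gamma> s') (act x t)" "\<lambda>x. act (\<psi> (tpC \<gamma> s') x) t"])
         (auto simp: act_add act_sc act_tp la ls pt mult.assoc)
  qed
  have psi0: "\<psi> 0 = 0" by (rule additive.zero, rule additive.intro, rule psi_add)
  have psi_comm: "\<forall>x t. \<psi> c (act x t) = act (\<psi> c x) t" for c
  proof -
    have "c \<in> C.span ((\<lambda>(x, y). tpC x y) ` (BVc \<times> BWc))" using BCspan by simp
    then show ?thesis
    proof (induction rule: C.span_induct_alt)
      case base then show ?case by (simp add: psi0 act_0)
    next
      case (step c x y)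
      then obtain \<gamma> s' where x: "x = tpC \<gamma> s'" "\<gamma> \<in> centroid scA mA" using BVc by auto
      show ?case using step.IH gen_comm[OF x(2)] unfolding x(1)
        by (simp add: psi_add psi_sc fun_scale_def act_add act_sc)
    qed
  qed
  have cent: "g (act x t) = act (g x) t" if "g \<in> centroid scT mT" for g x t
  proof -
    have "g \<in> range \<psi>" using \<psi>_iso that by (simp add: bij_betw_def)
    then obtain c where "g = \<psi> c" by blast
    then show ?thesis using psi_comm by simp
  qed
  define dl where "dl = (\<lambda>t x. D (act x t) - act (D x) t)"
  have dl_cent: "dl t \<in> centroid scT mT" for t
  proof -
    have lin: "Vector_Spaces.linear scT scT (dl t)"
      unfolding linear_iff dl_def
      by (simp add: vsT act_add act_sc D_add D_sc T.scale_right_diff_distrib)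
    have m1: "dl t (mT x y) = mT (dl t x) y" for x y
    proof -
      have "dl t (mT x y) = D (mT (act x t) y) - act (mT (D x) y + mT x (D y)) t"
        unfolding dl_def by (simp add: act_mT2 D_mul)
      also have "\<dots> = mT (D (act x t)) y + mT (act x t) (D y) - (mT (act (D x) t) y + mT (act x t) (D y))"
        by (simp add: act_add act_mT2 D_mul)
      also have "\<dots> = mT (dl t x) y" unfolding dl_def by (simp add: mT_diffL)
      finally show ?thesis .
    qed
    have m2: "dl t (mT x y) = mT x (dl t y)" for x y
    proof -
      have "dl t (mT x y) = D (mT x (act y t)) - act (mT (D x) y + mT x (D y)) t"
        unfolding dl_def by (simp add: act_mT1 D_mul)
      also have "\<dots> = mT (D x) (act y t) + mT x (D (act y t)) - (mT (D x) (act y t) + mT x (act (D y) t))"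
        by (simp add: act_add act_mT1 D_mul)
      also have "\<dots> = mT x (dl t y)" unfolding dl_def by (simp add: mT_diffR)
      finally show ?thesis .
    qed
    show ?thesis unfolding centroid_def using lin m1 m2 by auto
  qed
  have dl_comm: "dl t (act x s) = act (dl t x) s" for t x s
    using cent[OF dl_cent] .
  have dl_mult: "dl (s * t) x = act (dl s x) t + act (dl t x) s" for s t x
  proof -
    have "dl (s * t) x = D (act (act x s) t) - act (act (D x) s) t"
      unfolding dl_def by (simp add: act_assoc)
    also have "D (act (act x s) t) = dl t (act x s) + act (D (act x s)) t"
      unfolding dl_def by simp
    also have "D (act x s) = dl s x + act (D x) s" unfolding dl_def by simp
    finally show ?thesis by (simp add: dl_comm act_add)
  qed
  have dl_one: "dl 1 x = 0" for x unfolding dl_def by (simp add: act1)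
  define E where "E = (\<lambda>x. act (dl u x) v)"
  have dl_u: "dl u x = act (E x) u" for x
    unfolding E_def by (simp add: act_assoc mult.commute[of v u] u_inv act1)
  have dl_v: "dl v x = - act (E x) v" for x
  proof -
    have "0 = act (dl u x) v + act (dl v x) u" using dl_mult[of u v x] u_inv dl_one by simp
    then have "act (dl v x) u = - E x" unfolding E_def by (simp add: eq_neg_iff_add_eq_0 add.commute)
    then have "act (act (dl v x) u) v = act (- E x) v" by simp
    then show ?thesis by (simp add: act_assoc u_inv act1 act_neg)
  qed
  have dl_Z: "\<forall>x. dl (zpow u v k) x = scT (of_int k) (act (E x) (zpow u v k))" for k
  proof (induction k rule: int_induct[where k=0])
    case base then show ?case by (simp add: dl_one)
  next
    case (step1 i)
    show ?case
    proof
      fix x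
      have "dl (zpow u v (i + 1)) x = act (dl (zpow u v i) x) u + act (dl u x) (zpow u v i)"
        by (simp add: zpow_succ[OF u_inv] dl_mult)
      also have "\<dots> = scT (of_int i) (act (E x) (zpow u v (i + 1))) + act (E x) (zpow u v (i + 1))"
        using step1.IH by (simp add: act_sc act_assoc dl_u zpow_succ[OF u_inv] mult.commute)
      also have "\<dots> = scT (of_int (i + 1)) (act (E x) (zpow u v (i + 1)))"
        by (simp add: T.scale_left_distrib)
      finally show "dl (zpow u v (i + 1)) x = scT (of_int (i + 1)) (act (E x) (zpow u v (i + 1)))" .
    qed
  next
    case (step2 i)
    show ?case
    proof
      fix x
      have "dl (zpow u v (i - 1)) x = act (dl (zpow u v i) x) v + act (dl v x) (zpow u v i)"
        by (simp add: zpow_pred[OF u_inv] dl_mult)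
      also have "\<dots> = scT (of_int i) (act (E x) (zpow u v (i - 1))) - act (E x) (zpow u v (i - 1))"
        using step2.IH by (simp add: act_sc act_assoc dl_v act_neg zpow_pred[OF u_inv] mult.commute)
      also have "\<dots> = scT (of_int (i - 1)) (act (E x) (zpow u v (i - 1)))"
        by (simp add: T.scale_left_diff_distrib)
      finally show "dl (zpow u v (i - 1)) x = scT (of_int (i - 1)) (act (E x) (zpow u v (i - 1)))" .
    qed
  qed
  have KEY: "D (act x (zpow u v k)) = act (D x) (zpow u v k) + scT (of_int k) (act (E x) (zpow u v k))" for x k
    using dl_Z[of k] unfolding dl_def by (metis diff_eq_eq add.commute)
  have E_comm: "E (act x t) = act (E x) t" for x t
    unfolding E_def by (simp add: dl_comm act_assoc mult.commute)
  interpret S: vector_space scS by (rule S_vs)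
  have scS_mult: "scS c x * scS c' y = scS (c * c') (x * y)" for c c' x y
  proof -
    have "scS c x * scS c' y = scS c (x * scS c' y)" using S_alg by simp
    also have "x * scS c' y = scS c' (x * y)" using S_alg[rule_format, of c' y x] by (simp add: mult.commute)
    finally show ?thesis by simp
  qed
  have \<sigma>2_mult: "\<sigma>2 (x * y) = \<sigma>2 x * \<sigma>2 y" for x y
    using \<sigma>2_aut by (simp add: is_automorphism_def)
  have gS_mult: "x * y \<in> grade scS m \<omega> \<sigma>2 (j + j')"
    if "x \<in> grade scS m \<omega> \<sigma>2 j" "y \<in> grade scS m \<omega> \<sigma>2 j'" for x y j j'
    using that by (simp add: grade_def \<sigma>2_mult scS_mult omega_eps_add[OF \<omega>_root m_pos])
  have one_deg: "1 \<in> grade scS m \<omega> \<sigma>2 0"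
    by (simp add: grade_def \<sigma>2_one eps_def)
  have v_deg: "v \<in> grade scS m \<omega> \<sigma>2 (-1)"
  proof -
    define w where "w = \<omega> ^ eps m 1"
    define w' where "w' = \<omega> ^ eps m (-1)"
    have ww: "w' * w = 1" unfolding w_def w'_def
      using omega_eps_add[OF \<omega>_root m_pos, of "-1" 1] by (simp add: eps_def)
    have "\<sigma>2 u * \<sigma>2 v = 1" using \<sigma>2_mult[of u v] u_inv \<sigma>2_one by simp
    then have "scS w (u * \<sigma>2 v) = 1" using u_deg S_alg by (simp add: grade_def w_def)
    then have "scS w' (scS w (u * \<sigma>2 v)) = scS w' 1" by simp
    then have h: "u * \<sigma>2 v = scS w' 1" using ww by simp
    have "\<sigma>2 v = v * (u * \<sigma>2 v)" using u_inv by (simp add: mult.assoc[symmetric] mult.commute[of v u])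
    also have "\<dots> = scS w' 1 * v" using h by (simp add: mult.commute)
    also have "\<dots> = scS w' v" using S_alg[rule_format, of w' 1 v] by simp
    finally show ?thesis by (simp add: grade_def w'_def)
  qed
  have Z_deg: "zpow u v k \<in> grade scS m \<omega> \<sigma>2 k" for k
  proof (induction k rule: int_induct[where k=0])
    case base then show ?case using one_deg by simp
  next
    case (step1 i) then show ?case using gS_mult[OF step1.IH u_deg] by (simp add: zpow_succ[OF u_inv])
  next
    case (step2 i) then show ?case using gS_mult[OF step2.IH v_deg] by (simp add: zpow_pred[OF u_inv])
  qed
  have inT0: "tp a w \<in> tgrade scT tp (grade scA m \<omega> \<sigma>1) (grade scS m \<omega> \<sigma>2) 0"
    if "w \<in> grade scS m \<omega> \<sigma>2 j" "[j = - i] (mod int m)" for w j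
  proof -
    have "grade scS m \<omega> \<sigma>2 j = grade scS m \<omega> \<sigma>2 (- i)" by (rule grade_cong[OF that(2)])
    then have "w \<in> grade scS m \<omega> \<sigma>2 (- i)" using that(1) by blast
    then have "tp a w \<in> {tp a s | a s j. a \<in> grade scA m \<omega> \<sigma>1 (0 - j) \<and> s \<in> grade scS m \<omega> \<sigma>2 j}"
      using a_deg by force
    then show ?thesis unfolding tgrade_def by (rule T.span_base)
  qed
  have eps_int: "int (eps m x) = x mod int m" for x
    using m_pos by (simp add: eps_def)
  have dvd_mod: "int m dvd x - x mod int m" for x
    by (simp add: minus_mod_eq_mult_div)
  have act_tp': "act (tp a1 s1) s' = tp a1 (s1 * s')" for a1 s1 s' using act_tp by blast
  have Zinv: "zpow u v (- k) * zpow u v k = 1" for k by (rule zpow_inv[OF u_inv])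
  have Zinv': "zpow u v k * zpow u v (- k) = 1" for k using Zinv[of k] by (simp add: mult.commute)
  have partA: "D (tp a b) =
              act (d (tp a (zpow u v (- int (eps m s)) * b))) (zpow u v (int (eps m s)))
              + scT (of_nat (eps m s) * inverse (of_nat m * of_int n))
                  (act (act (d (tp a (zpow u v (- int (eps m i) + int m * n)))) (zpow u v (- (int m * n)))
                        - d (tp a (zpow u v (- int (eps m i)))))
                       (zpow u v (int (eps m i)) * b))"
    if n0: "of_int n \<noteq> (0::'k)" for n
  proof -
    define e where "e = eps m s"
    define ei where "ei = eps m i"
    define N where "N = int m * n"
    define y where "y = tp a (zpow u v (- int e) * b)"
    define z where "z = tp a (zpow u v (- int ei))"
    define w where "w = tp a (zpow u v (- int ei + N))"
    have y0: "y \<in> tgrade scT tp (grade scA m \<omega> \<sigma>1) (grade scS m \<omega> \<sigma>2) 0"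
      unfolding y_def
    proof (rule inT0[OF gS_mult[OF Z_deg b_deg]])
      show "[- int e + (s - i) = - i] (mod int m)"
        unfolding cong_iff_dvd_diff e_def eps_int using dvd_mod[of s] by simp
    qed
    have z0: "z \<in> tgrade scT tp (grade scA m \<omega> \<sigma>1) (grade scS m \<omega> \<sigma>2) 0"
      unfolding z_def
    proof (rule inT0[OF Z_deg])
      show "[- int ei = - i] (mod int m)"
        unfolding cong_iff_dvd_diff ei_def eps_int using dvd_mod[of i]
        by (metis dvd_minus_iff minus_diff_eq diff_minus_eq_add add.commute uminus_add_conv_diff)
    qed
    have w0: "w \<in> tgrade scT tp (grade scA m \<omega> \<sigma>1) (grade scS m \<omega> \<sigma>2) 0"
      unfolding w_def
    proof (rule inT0[OF Z_deg])
      have q: "i - i mod int m = int m * (i div int m)" by (simp add: minus_mod_eq_mult_div)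
      have "- int ei + N - - i = int m * (i div int m) + int m * n"
        unfolding ei_def eps_int N_def using q by linarith
      then show "[- int ei + N = - i] (mod int m)"
        unfolding cong_iff_dvd_diff by simp
    qed
    have hy: "act y (zpow u v (int e)) = tp a b"
    proof -
      have "zpow u v (- int e) * b * zpow u v (int e) = b"
        using Zinv[of "int e"] by (metis mult.assoc mult.commute mult_1_right)
      then show ?thesis unfolding y_def act_tp' by simp
    qed
    have st1: "D (tp a b) = act (d y) (zpow u v (int e)) + scT (of_nat e) (act (E y) (zpow u v (int e)))"
      using KEY[of y "int e"] hy D_ext y0 by simp
    have hw: "act z (zpow u v N) = w"
      unfolding z_def w_def act_tp' by (simp add: zpow_add[OF u_inv])
    have st2: "d w = act (d z) (zpow u v N) + scT (of_int N) (act (E z) (zpow u v N))"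
      using KEY[of z N] hw D_ext z0 w0 by simp
    have st3: "act (d w) (zpow u v (- N)) - d z = scT (of_int N) (E z)"
      unfolding st2 by (simp add: act_add act_sc act_assoc Zinv' act1)
    have hyz: "y = act z (zpow u v (int ei) * zpow u v (- int e) * b)"
      unfolding y_def z_def act_tp' using Zinv[of "int ei"]
      by (metis mult.assoc mult_1_left)
    have st4: "act (E y) (zpow u v (int e)) = act (E z) (zpow u v (int ei) * b)"
    proof -
      have "act (E y) (zpow u v (int e)) = act (E z) (zpow u v (int ei) * zpow u v (- int e) * b * zpow u v (int e))"
        unfolding hyz by (simp add: E_comm act_assoc)
      also have "zpow u v (int ei) * zpow u v (- int e) * b * zpow u v (int e) = zpow u v (int ei) * b"
        using Zinv[of "int e"] by (metis mult.assoc mult.commute mult_1_right)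
      finally show ?thesis .
    qed
    have Nnz: "(of_nat m * of_int n :: 'k) \<noteq> 0" using n0 m_nz by simp
    have cN: "of_nat e * inverse (of_nat m * of_int n) * of_int N = (of_nat e :: 'k)"
      unfolding N_def using Nnz by (simp add: field_simps)
    have "scT (of_nat e * inverse (of_nat m * of_int n))
            (act (act (d w) (zpow u v (- N)) - d z) (zpow u v (int ei) * b))
          = scT (of_nat e) (act (E y) (zpow u v (int e)))"
      unfolding st3 st4 act_sc using cN by simp
    then show ?thesis
      using st1 unfolding e_def[symmetric] ei_def[symmetric] N_def[symmetric] y_def[symmetric]
        z_def[symmetric] w_def[symmetric] by simp
  qed
  have partB: "D (tp a b) =
              act (d (tp a (zpow u v (- (int CHAR('k) * r)) * b))) (zpow u v (int CHAR('k) * r))"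
    if "[r * int CHAR('k) = s] (mod int m)" for r
  proof -
    define y where "y = tp a (zpow u v (- (int CHAR('k) * r)) * b)"
    have y0: "y \<in> tgrade scT tp (grade scA m \<omega> \<sigma>1) (grade scS m \<omega> \<sigma>2) 0"
      unfolding y_def
    proof (rule inT0[OF gS_mult[OF Z_deg b_deg]])
      have "int m dvd r * int CHAR('k) - s" using that by (simp add: cong_iff_dvd_diff)
      then have "int m dvd - (int CHAR('k) * r) + (s - i) - - i"
        by (metis dvd_minus_iff minus_diff_eq mult.commute diff_minus_eq_add add.commute uminus_add_conv_diff add_diff_cancel_right diff_add_cancel)
      then show "[- (int CHAR('k) * r) + (s - i) = - i] (mod int m)"
        by (simp add: cong_iff_dvd_diff)
    qed
    have hy: "act y (zpow u v (int CHAR('k) * r)) = tp a b"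
    proof -
      have "zpow u v (- (int CHAR('k) * r)) * b * zpow u v (int CHAR('k) * r) = b"
        using Zinv[of "int CHAR('k) * r"] by (metis mult.assoc mult.commute mult_1_right)
      then show ?thesis unfolding y_def act_tp' by simp
    qed
    have c0: "(of_int (int CHAR('k) * r) :: 'k) = 0" by simp
    show ?thesis
      using KEY[of y "int CHAR('k) * r"] hy D_ext y0 c0 unfolding y_def[symmetric] by simp
  qed
  have c0: "of_int n \<noteq> (0::'k)" if "CHAR('k) = 0" "n \<noteq> 0" for n
    using that by (simp add: of_int_eq_0_iff_char_dvd)
  show ?thesis
    apply (intro conjI allI impI)
      apply (erule partA)
     apply (rule partA, erule (1) c0)
    apply (rule partB, blast)
    done
qed

end
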